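(* Let $H$ and $K$ be finite-dimensional complex Hilbert spaces, let $\mathcal{C}$ be a mapping cone on $K$, and let $B$ be a C*-subalgebra of $B(H)$ containing the identity $1$. If $\phi: B\to B(K)$ is a $\mathcal{C}$-positive linear map, then there is a $\mathcal{C}$-positive linear map $\psi: B(H)\to B(K)$ extending $\phi$.
   Context: A mapping cone $\mathcal{C}$ on $K$ is a closed convex cone of positive linear maps $B(K)\to B(K)$ such that $\alpha\in\mathcal{C}$ implies $\beta\circ\alpha\circ\gamma\in\mathcal{C}$ for all completely positive maps $\beta,\gamma: B(K)\to B(K)$. Fix an orthonormal basis of $K$ and let $b^t$ denote the transpose of $b\in B(K)$; $Tr$ is the usual trace. For a linear subspace $A\subseteq B(H)$ containing $1$, let $A\otimes B(K)\subseteq B(H\otimes K)$ be the span of $\{a\otimes b: a\in A, b\in B(K)\}$. For a linear map $\phi: A\to B(K)$, its dual functional $\tilde\phi$ is the linear functional on $A\otimes B(K)$ with $\tilde\phi(a\otimes b)=Tr(\phi(a)b^t)$. Let $P(A,\mathcal{C})=\{x\in (A\otimes B(K))_{sa} : (\iota\otimes\alpha)(x)\ge 0 \ \forall \alpha\in\mathcal{C}\}$, with $\iota$ the identity map on $B(H)$. The map $\phi$ is $\mathcal{C}$-positive if $\tilde\phi(x)\ge 0$ for all $x\in P(A,\mathcal{C})$. *)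

theory Defs
  imports "HOL-Analysis.Analysis"
begin

text \<open>Finite-dimensional complex Hilbert spaces H, K are modelled as complex^'n, complex^'k
(standard orthonormal basis); B(H) is the type of complex 'n x 'n matrices complex^'n^'n,
and H (x) K is complex^('n \<times> 'k).\<close>

type_synonym 'n cmat = "complex^'n^'n"

definition smat :: "complex \<Rightarrow> 'n::finite cmat \<Rightarrow> 'n::finite cmat" where
  "smat c A = (\<chi> i j. c * A $ i $ j)"

definition mc_adj :: "'n::finite cmat \<Rightarrow> 'n::finite cmat" where
  "mc_adj A = (\<chi> i j. cnj (A $ j $ i))"

definition mtr :: "'n::finite cmat \<Rightarrow> complex" where
  "mtr A = (\<Sum>i\<in>UNIV. A $ i $ i)"

definition cpsd :: "'n::finite cmat \<Rightarrow> bool" where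
  "cpsd A \<longleftrightarrow> (\<forall>x::complex^'n.
     (let q = (\<Sum>i\<in>UNIV. cnj (x $ i) * (A *v x) $ i) in Im q = 0 \<and> Re q \<ge> 0))"

definition kron :: "'n::finite cmat \<Rightarrow> 'k::finite cmat \<Rightarrow> ('n::finite \<times> 'k::finite) cmat" where
  "kron a b = (\<chi> p q. a $ fst p $ fst q * b $ snd p $ snd q)"

definition cspan :: "'n::finite cmat set \<Rightarrow> 'n::finite cmat set" where
  "cspan S = {x. \<exists>m (c::nat \<Rightarrow> complex) s. (\<forall>i<m. s i \<in> S) \<and> x = (\<Sum>i<m. smat (c i) (s i))}"

definition tensor_space :: "'n::finite cmat set \<Rightarrow> ('n::finite \<times> 'k::finite) cmat set" where
  "tensor_space A = cspan {kron a b | a b. a \<in> A}"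

text \<open>(\<iota> \<otimes> \<alpha>)(x): apply \<alpha> to each K-block of x.\<close>
definition id_tensor :: "('k::finite cmat \<Rightarrow> 'k::finite cmat) \<Rightarrow> ('n::finite \<times> 'k::finite) cmat \<Rightarrow> ('n::finite \<times> 'k::finite) cmat" where
  "id_tensor \<alpha> x = (\<chi> p q. \<alpha> (\<chi> k l. x $ (fst p, k) $ (fst q, l)) $ snd p $ snd q)"

definition clinear_on :: "'n::finite cmat set \<Rightarrow> ('n::finite cmat \<Rightarrow> 'k::finite cmat) \<Rightarrow> bool" where
  "clinear_on A f \<longleftrightarrow> (\<forall>a\<in>A. \<forall>b\<in>A. \<forall>c. f (a + b) = f a + f b \<and> f (smat c a) = smat c (f a))"

definition positive_map :: "('k::finite cmat \<Rightarrow> 'k::finite cmat) \<Rightarrow> bool" where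
  "positive_map f \<longleftrightarrow> clinear_on UNIV f \<and> (\<forall>A. cpsd A \<longrightarrow> cpsd (f A))"

text \<open>Positivity of an m x m block matrix with blocks in B(K), i.e. an element of M_m(B(K)).\<close>
definition block_psd :: "nat \<Rightarrow> (nat \<Rightarrow> nat \<Rightarrow> 'k::finite cmat) \<Rightarrow> bool" where
  "block_psd m A \<longleftrightarrow> (\<forall>x::nat \<Rightarrow> complex^'k.
     (let q = (\<Sum>i<m. \<Sum>j<m. \<Sum>k\<in>UNIV. cnj (x i $ k) * (A i j *v x j) $ k)
      in Im q = 0 \<and> Re q \<ge> 0))"

definition completely_positive :: "('k::finite cmat \<Rightarrow> 'k::finite cmat) \<Rightarrow> bool" where
  "completely_positive f \<longleftrightarrow> clinear_on UNIV f \<and>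
     (\<forall>m A. block_psd m A \<longrightarrow> block_psd m (\<lambda>i j. f (A i j)))"

definition mapping_cone :: "('k::finite cmat \<Rightarrow> 'k::finite cmat) set \<Rightarrow> bool" where
  "mapping_cone C \<longleftrightarrow>
     C \<noteq> {} \<and> closed C \<and>
     (\<forall>\<alpha>\<in>C. positive_map \<alpha>) \<and>
     (\<forall>\<alpha>\<in>C. \<forall>\<beta>\<in>C. (\<lambda>X. \<alpha> X + \<beta> X) \<in> C) \<and>
     (\<forall>\<alpha>\<in>C. \<forall>t::real. t \<ge> 0 \<longrightarrow> (\<lambda>X. smat (complex_of_real t) (\<alpha> X)) \<in> C) \<and>
     (\<forall>\<alpha>\<in>C. \<forall>\<beta> \<gamma>. completely_positive \<beta> \<and> completely_positive \<gamma> \<longrightarrow> \<beta> \<circ> \<alpha> \<circ> \<gamma> \<in> C)"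

definition P_set :: "'n::finite cmat set \<Rightarrow> ('k::finite cmat \<Rightarrow> 'k::finite cmat) set \<Rightarrow> ('n::finite \<times> 'k::finite) cmat set" where
  "P_set A C = {x. x \<in> tensor_space A \<and> mc_adj x = x \<and> (\<forall>\<alpha>\<in>C. cpsd (id_tensor \<alpha> x))}"

text \<open>\<phi> is C-positive on A: the dual functional \<phi>~, given on any representation
x = \<Sum> c_i (a_i \<otimes> b_i) by \<Sum> c_i Tr(\<phi>(a_i) b_i^t), is \<ge> 0 on P(A,C).\<close>
definition C_positive :: "('k::finite cmat \<Rightarrow> 'k::finite cmat) set \<Rightarrow> 'n::finite cmat set \<Rightarrow> ('n::finite cmat \<Rightarrow> 'k::finite cmat) \<Rightarrow> bool" where
  "C_positive C A \<phi> \<longleftrightarrow> (\<forall>x\<in>P_set A C. \<forall>m (c::nat \<Rightarrow> complex) a b.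
     (\<forall>i<m. a i \<in> A) \<and> x = (\<Sum>i<m. smat (c i) (kron (a i) (b i))) \<longrightarrow>
     (let v = (\<Sum>i<m. c i * mtr (\<phi> (a i) ** transpose (b i))) in Im v = 0 \<and> Re v \<ge> 0))"

definition unital_cstar_subalg :: "'n::finite cmat set \<Rightarrow> bool" where
  "unital_cstar_subalg B \<longleftrightarrow> mat 1 \<in> B \<and> closed B \<and>
     (\<forall>a\<in>B. \<forall>b\<in>B. a + b \<in> B \<and> a ** b \<in> B) \<and>
     (\<forall>a\<in>B. \<forall>c. smat c a \<in> B) \<and> (\<forall>a\<in>B. mc_adj a \<in> B)"

end

theory Submission imports Defs begin

lemma smat_nth[simp]: "smat c A $ i $ j = c * A $ i $ j" by (simp add: smat_def)
lemma mc_adj_nth[simp]: "mc_adj A $ i $ j = cnj (A $ j $ i)" by (simp add: mc_adj_def)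
lemma kron_nth[simp]: "kron a b $ p $ q = a $ fst p $ fst q * b $ snd p $ snd q" by (simp add: kron_def)
lemma id_tensor_nth: "id_tensor \<alpha> x $ p $ q = \<alpha> (\<chi> k l. x $ (fst p, k) $ (fst q, l)) $ snd p $ snd q"
  by (simp add: id_tensor_def)

lemma scaleR_nth2[simp]: "(r *\<^sub>R A) $ i $ j = of_real r * (A $ i $ j :: complex)"
  unfolding vector_scaleR_component by (simp add: scaleR_conv_of_real)
lemma smat_scaleR: "smat (of_real r) A = r *\<^sub>R A" by (simp add: vec_eq_iff del: vector_scaleR_component)

definition blk :: "('n::finite \<times> 'k::finite) cmat \<Rightarrow> 'n \<times> 'k \<Rightarrow> 'n \<times> 'k \<Rightarrow> 'k cmat" where
  "blk x p q = (\<chi> k l. x $ (fst p, k) $ (fst q, l))"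
lemma id_tensor_blk: "id_tensor \<alpha> x $ p $ q = \<alpha> (blk x p q) $ snd p $ snd q"
  by (simp add: id_tensor_def blk_def)
lemma blk_add: "blk (x + y) p q = blk x p q + blk y p q" by (simp add: blk_def vec_eq_iff)
lemma blk_scaleR: "blk (r *\<^sub>R x) p q = r *\<^sub>R blk x p q" by (simp add: blk_def vec_eq_iff)
lemma blk_kron: "blk (kron a b) p q = smat (a $ fst p $ fst q) b" by (simp add: blk_def vec_eq_iff)
lemma smat_zero[simp]: "smat 0 A = 0" by (simp add: vec_eq_iff)
lemma smat_one[simp]: "smat 1 A = A" by (simp add: vec_eq_iff)
lemma smat_add: "smat c (A + B) = smat c A + smat c B" by (simp add: vec_eq_iff algebra_simps)
lemma smat_smat: "smat c (smat d A) = smat (c*d) A" by (simp add: vec_eq_iff algebra_simps)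
lemma smat_sum: "smat c (sum f S) = (\<Sum>i\<in>S. smat c (f i))"
  by (simp add: vec_eq_iff sum_distrib_left)

locale linm = fixes \<alpha> :: "'k::finite cmat \<Rightarrow> 'k cmat" assumes lin: "clinear_on UNIV \<alpha>"
begin
lemma add: "\<alpha> (a + b) = \<alpha> a + \<alpha> b" using lin by (simp add: clinear_on_def)
lemma smat: "\<alpha> (smat c a) = smat c (\<alpha> a)" using lin by (simp add: clinear_on_def)
lemma zero: "\<alpha> 0 = 0" using smat[of 0 0] by simp
lemma scaleR: "\<alpha> (r *\<^sub>R a) = r *\<^sub>R \<alpha> a" using smat[of "of_real r" a] by (simp add: smat_scaleR)
lemma uminus: "\<alpha> (- a) = - \<alpha> a" using scaleR[of "-1" a] by simp
lemma diff: "\<alpha> (a - b) = \<alpha> a - \<alpha> b" using add[of a "-b"] uminus[of b] by simp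

lemma id_tensor_add: "id_tensor \<alpha> (x + y) = id_tensor \<alpha> x + id_tensor \<alpha> y"
  by (simp add: vec_eq_iff id_tensor_blk blk_add add)
lemma id_tensor_scaleR: "id_tensor \<alpha> (r *\<^sub>R x) = r *\<^sub>R id_tensor \<alpha> x"
  by (simp add: vec_eq_iff id_tensor_blk blk_scaleR scaleR del: scaleR_nth2)
lemma id_tensor_zero: "id_tensor \<alpha> 0 = 0"
  using id_tensor_scaleR[of 0 0] by simp
lemma id_tensor_kron: "id_tensor \<alpha> (kron a b) = kron a (\<alpha> b)"
  by (simp add: vec_eq_iff id_tensor_blk blk_kron smat)
end

lemma mc_adj_add: "mc_adj (x + y) = mc_adj x + mc_adj y" by (simp add: vec_eq_iff)
lemma mc_adj_diff: "mc_adj (x - y) = mc_adj x - mc_adj y" by (simp add: vec_eq_iff)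
lemma mc_adj_scaleR: "mc_adj (r *\<^sub>R x) = r *\<^sub>R mc_adj x" by (simp add: vec_eq_iff)
lemma mc_adj_smat: "mc_adj (smat c x) = smat (cnj c) (mc_adj x)" by (simp add: vec_eq_iff)
lemma mc_adj_kron: "mc_adj (kron a b) = kron (mc_adj a) (mc_adj b)" by (simp add: vec_eq_iff)
lemma mc_adj_zero[simp]: "mc_adj 0 = 0" by (simp add: vec_eq_iff)
lemma mc_adj_sum: "mc_adj (sum f S) = (\<Sum>i\<in>S. mc_adj (f i))" by (simp add: vec_eq_iff)

definition qf :: "'n::finite cmat \<Rightarrow> complex^'n \<Rightarrow> complex" where
  "qf A x = (\<Sum>i\<in>UNIV. cnj (x $ i) * (A *v x) $ i)"

lemma cpsd_iff: "cpsd A \<longleftrightarrow> (\<forall>x. Im (qf A x) = 0 \<and> 0 \<le> Re (qf A x))"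
  by (simp add: cpsd_def qf_def Let_def)

lemma qf_expand: "qf A x = (\<Sum>i\<in>UNIV. \<Sum>j\<in>UNIV. cnj (x $ i) * A $ i $ j * x $ j)"
  by (simp add: qf_def matrix_vector_mult_def sum_distrib_left mult.assoc)

lemma qf_add: "qf (A + B) x = qf A x + qf B x"
  by (simp add: qf_expand algebra_simps sum.distrib)
lemma qf_scaleR: "qf (r *\<^sub>R A) x = of_real r * qf A x"
  by (simp add: qf_expand sum_distrib_left algebra_simps del: vector_scaleR_component)

lemma cpsd_add: "cpsd A \<Longrightarrow> cpsd B \<Longrightarrow> cpsd (A + B)"
  by (simp add: cpsd_iff qf_add)
lemma cpsd_scaleR: "cpsd A \<Longrightarrow> 0 \<le> r \<Longrightarrow> cpsd (r *\<^sub>R A)"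
  by (simp add: cpsd_iff qf_scaleR)
lemma cpsd_zero: "cpsd 0"
  by (simp add: cpsd_iff qf_expand)

definition P0 :: "('k::finite cmat \<Rightarrow> 'k cmat) set \<Rightarrow> ('n::finite \<times> 'k) cmat set" where
  "P0 C = {x. mc_adj x = x \<and> (\<forall>\<alpha>\<in>C. cpsd (id_tensor \<alpha> x))}"

lemma pos_lin: "positive_map \<alpha> \<Longrightarrow> linm \<alpha>"
  by (simp add: positive_map_def linm_def)

lemma P0_add: assumes "\<forall>\<alpha>\<in>C. positive_map \<alpha>" "x \<in> P0 C" "y \<in> P0 C" shows "x + y \<in> P0 C"
  using assms by (auto simp: P0_def mc_adj_add linm.id_tensor_add[OF pos_lin] cpsd_add)
lemma P0_scaleR: assumes "\<forall>\<alpha>\<in>C. positive_map \<alpha>" "x \<in> P0 C" "0 \<le> r" shows "r *\<^sub>R x \<in> P0 C"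
  using assms by (auto simp: P0_def mc_adj_scaleR linm.id_tensor_scaleR[OF pos_lin] cpsd_scaleR)
lemma P0_zero: assumes "\<forall>\<alpha>\<in>C. positive_map \<alpha>" shows "0 \<in> P0 C"
  using assms by (auto simp: P0_def linm.id_tensor_zero[OF pos_lin] cpsd_zero)

definition outer :: "complex^'n::finite \<Rightarrow> 'n cmat" where
  "outer z = (\<chi> i j. z $ i * cnj (z $ j))"
definition diagm :: "('n::finite \<Rightarrow> real) \<Rightarrow> 'n cmat" where
  "diagm d = (\<chi> i j. if i = j then of_real (d i) else 0)"
lemma outer_nth[simp]: "outer z $ i $ j = z $ i * cnj (z $ j)" by (simp add: outer_def)
lemma diagm_nth[simp]: "diagm d $ i $ j = (if i = j then of_real (d i) else 0)" by (simp add: diagm_def)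

lemma if_times: "(if P then a else 0) * b = (if P then a * b else (0::complex))"
  "b * (if P then a else 0) = (if P then b * a else (0::complex))" by auto

lemma cnj_mult_self: "Im (cnj w * w) = 0 \<and> 0 \<le> Re (cnj w * w)"
  by simp

lemma cpsd_by_sq: assumes "\<And>x. \<exists>w. qf A x = cnj w * w" shows "cpsd A"
  unfolding cpsd_iff
proof
  fix x obtain w where "qf A x = cnj w * w" using assms by blast
  then show "Im (qf A x) = 0 \<and> 0 \<le> Re (qf A x)" using cnj_mult_self[of w] by (simp only:)
qed

lemma cpsd_outer: "cpsd (outer z)"
proof -
  have "qf (outer z) x = cnj (\<Sum>j\<in>UNIV. cnj (z $ j) * x $ j) * (\<Sum>j\<in>UNIV. cnj (z $ j) * x $ j)" for x
    by (simp add: qf_expand sum_product mult_ac) (rule sum.swap)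
  then show ?thesis by (intro cpsd_by_sq) blast
qed

lemma nonneg_sum: "(\<And>i. i \<in> S \<Longrightarrow> Im (f i) = 0 \<and> 0 \<le> Re (f i)) \<Longrightarrow> Im (sum f S) = 0 \<and> 0 \<le> Re (sum f S)"
  by (simp add: Im_sum Re_sum sum_nonneg)

lemma cpsd_diagm: assumes "\<And>i. 0 \<le> d i" shows "cpsd (diagm d)"
proof -
  have "qf (diagm d) x = (\<Sum>i\<in>UNIV. of_real (d i) * (cnj (x $ i) * x $ i))" for x
    unfolding qf_expand by (intro sum.cong refl) (simp add: if_times sum.delta cong: if_cong)
  then show ?thesis unfolding cpsd_iff using assms
    by (auto intro!: sum_nonneg mult_nonneg_nonneg[OF _ add_nonneg_nonneg[OF zero_le_square zero_le_square]] simp: Im_sum Re_sum)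
qed

lemma sum_prod_UNIV: "(\<Sum>p\<in>(UNIV::('a::finite\<times>'b::finite) set). f p) = (\<Sum>i\<in>UNIV. \<Sum>k\<in>UNIV. f (i,k))"
  unfolding sum.cartesian_product UNIV_Times_UNIV by simp

lemma delta2: "(\<Sum>j\<in>UNIV. \<Sum>l\<in>UNIV. (if i = j then a else 0) * f j l) = (\<Sum>l\<in>UNIV. a * f i l)"
  for a :: complex and i :: "'a::finite"
proof -
  have "(\<Sum>j\<in>UNIV. \<Sum>l\<in>UNIV. (if i = j then a else 0) * f j l) = (\<Sum>j\<in>UNIV. if i = j then a * (\<Sum>l\<in>UNIV. f j l) else 0)"
    by (intro sum.cong refl) (simp add: sum_distrib_left)
  also have "\<dots> = a * (\<Sum>l\<in>UNIV. f i l)" by (simp add: sum.delta')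
  finally show ?thesis by (simp add: sum_distrib_left)
qed

lemma cpsd_kron_diagm: assumes "\<And>i. 0 \<le> d i" "cpsd Q" shows "cpsd (kron (diagm d) Q)"
proof -
  have "qf (kron (diagm d) Q) x = (\<Sum>i\<in>UNIV. of_real (d i) * qf Q (\<chi> k. x $ (i,k)))" for x
  proof -
    have "qf (kron (diagm d) Q) x = (\<Sum>i\<in>UNIV. \<Sum>k\<in>UNIV. \<Sum>j\<in>UNIV. \<Sum>l\<in>UNIV. (if i = j then of_real (d i) else 0) * (cnj (x $ (i,k)) * Q $ k $ l * x $ (j,l)))"
      by (simp add: qf_expand sum_prod_UNIV mult_ac cong: if_cong)
    also have "\<dots> = (\<Sum>i\<in>UNIV. \<Sum>k\<in>UNIV. \<Sum>l\<in>UNIV. of_real (d i) * (cnj (x $ (i,k)) * Q $ k $ l * x $ (i,l)))"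
      by (simp only: delta2)
    also have "\<dots> = (\<Sum>i\<in>UNIV. of_real (d i) * qf Q (\<chi> k. x $ (i,k)))"
      by (simp add: qf_expand sum_distrib_left mult_ac)
    finally show ?thesis .
  qed
  then show ?thesis using assms unfolding cpsd_iff
    by (auto intro!: sum_nonneg mult_nonneg_nonneg simp: Re_sum Im_sum)
qed

lemma cpsd_kron_outer: assumes "cpsd Q" shows "cpsd (kron (outer z) Q)"
proof -
  have "qf (kron (outer z) Q) x = qf Q (\<chi> k. \<Sum>i\<in>UNIV. cnj (z $ i) * x $ (i,k))" for x
  proof -
    have "qf (kron (outer z) Q) x = (\<Sum>i\<in>UNIV. \<Sum>k\<in>UNIV. \<Sum>j\<in>UNIV. \<Sum>l\<in>UNIV. cnj (x $ (i,k)) * z $ i * cnj (z $ j) * Q $ k $ l * x $ (j,l))"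
      by (simp add: qf_expand sum_prod_UNIV mult_ac)
    also have "\<dots> = (\<Sum>k\<in>UNIV. \<Sum>i\<in>UNIV. \<Sum>l\<in>UNIV. \<Sum>j\<in>UNIV. cnj (x $ (i,k)) * z $ i * cnj (z $ j) * Q $ k $ l * x $ (j,l))"
      by (rule trans[OF sum.swap], intro sum.cong refl, rule sum.swap)
    also have "\<dots> = (\<Sum>k\<in>UNIV. \<Sum>l\<in>UNIV. \<Sum>i\<in>UNIV. \<Sum>j\<in>UNIV. cnj (x $ (i,k)) * z $ i * cnj (z $ j) * Q $ k $ l * x $ (j,l))"
      by (rule sum.cong[OF refl], rule sum.swap)
    also have "\<dots> = qf Q (\<chi> k. \<Sum>i\<in>UNIV. cnj (z $ i) * x $ (i,k))"
      by (simp add: qf_expand sum_distrib_left sum_distrib_right mult_ac)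
    finally show ?thesis .
  qed
  then show ?thesis using assms unfolding cpsd_iff by simp
qed


definition zvec :: "complex \<Rightarrow> 'n::finite \<Rightarrow> 'n \<Rightarrow> complex^'n" where
  "zvec c i j = (\<chi> m. (if m = i then 1 else 0) + c * (if m = j then 1 else 0))"
lemma zvec_nth[simp]: "zvec c i j $ m = (if m = i then 1 else 0) + c * (if m = j then 1 else 0)"
  by (simp add: zvec_def)

lemma i3: "\<i>^3 = - \<i>" by (simp add: power3_eq_cube)
lemma four_set: "{..<4::nat} = {0,1,2,3}" by auto

lemma pol: "(\<Sum>s<4. (\<i>^s/4) * (zvec (\<i>^s) i j $ a * cnj (zvec (\<i>^s) i j $ b))) = (if a = i \<and> b = j then 1 else 0)"
  unfolding four_set
  by (cases "a = i"; cases "a = j"; cases "b = i"; cases "b = j") (simp_all add: i3 field_simps)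

lemma quarter: assumes "cnj c * c = 1"
  shows "diagm (\<lambda>m. 4) - outer (zvec c i j) = diagm (\<lambda>m. 4 - (if m = i then 2 else 0) - (if m = j then 2 else 0)) + outer (zvec (-c) i j)"
proof -
  have c2: "c * cnj c = 1" using assms by (simp add: mult.commute)
  have "(diagm (\<lambda>m. 4) - outer (zvec c i j)) $ a $ b = (diagm (\<lambda>m. 4 - (if m = i then 2 else 0) - (if m = j then 2 else 0)) + outer (zvec (-c) i j)) $ a $ b" for a b
    by (cases "a = b"; cases "a = i"; cases "a = j"; cases "b = i"; cases "b = j") (simp_all add: c2 assms algebra_simps)
  then show ?thesis by (simp add: vec_eq_iff)
qed

lemma cpsd_quarter: assumes "cnj c * c = 1" shows "cpsd (diagm (\<lambda>m. 4) - outer (zvec c i j))"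
  unfolding quarter[OF assms] by (intro cpsd_add cpsd_diagm cpsd_outer) auto

lemma kron_add_left: "kron (A + B) Q = kron A Q + kron B Q" by (simp add: vec_eq_iff algebra_simps)
lemma kron_diagm_mat1: "kron (mat 1) (mat 1) = (mat 1 :: ('n::finite \<times> 'k::finite) cmat)"
  by (auto simp: vec_eq_iff mat_def prod_eq_iff)
lemma mat1_diagm: "mat 1 = diagm (\<lambda>_. 1)" by (simp add: vec_eq_iff mat_def)
lemma mc_adj_outer: "mc_adj (outer z) = outer z" by (simp add: vec_eq_iff)
lemma mc_adj_mat1: "mc_adj (mat 1) = mat 1" by (simp add: vec_eq_iff mat_def)

lemma cnj_ipow: "cnj (\<i>^s) * \<i>^s = 1"
proof -
  have "(- \<i>)^s * \<i>^s = (- \<i> * \<i>)^s" by (simp only: power_mult_distrib)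
  then show ?thesis by simp
qed


definition eunit :: "('n::finite \<times> 'k::finite) cmat" where "eunit = kron (mat 1) (mat 1)"
definition Xm :: "('n::finite \<times> 'k::finite) \<times> ('n \<times> 'k) \<times> nat \<times> nat \<Rightarrow> ('n \<times> 'k) cmat" where
  "Xm m = (case m of (p,q,s,t) \<Rightarrow> kron (outer (zvec (\<i>^s) (fst p) (fst q))) (outer (zvec (\<i>^t) (snd p) (snd q))))"
definition coef :: "('n::finite \<times> 'k::finite) cmat \<Rightarrow> ('n \<times> 'k) \<times> ('n \<times> 'k) \<times> nat \<times> nat \<Rightarrow> complex" where
  "coef y m = (case m of (p,q,s,t) \<Rightarrow> y $ p $ q * (\<i>^s/4) * (\<i>^t/4))"
definition Iset :: "(('n::finite \<times> 'k::finite) \<times> ('n \<times> 'k) \<times> nat \<times> nat) set" where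
  "Iset = UNIV \<times> UNIV \<times> {..<4} \<times> {..<4}"

lemma finite_Iset: "finite Iset" by (simp add: Iset_def)

lemma sum_times: "sum f (A \<times> B) = (\<Sum>a\<in>A. \<Sum>b\<in>B. f (a,b))"
  by (simp add: sum.cartesian_product)

lemma ifs_prod: "(if fst a = fst p \<and> fst b = fst q then 1 else 0) * (if snd a = snd p \<and> snd b = snd q then 1 else (0::complex))
   = (if p = a \<and> q = b then 1 else 0)"
  by (auto simp: prod_eq_iff)

lemma decomp: "y = (\<Sum>m\<in>Iset. smat (coef y m) (Xm m))"
proof -
  have "(\<Sum>m\<in>Iset. smat (coef y m) (Xm m)) $ a $ b = y $ a $ b" for a b
  proof -
    have "(\<Sum>m\<in>Iset. smat (coef y m) (Xm m)) $ a $ b =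
      (\<Sum>p\<in>UNIV. \<Sum>q\<in>UNIV. \<Sum>s<4. \<Sum>t<4. y$p$q * (((\<i>^s/4) * (zvec (\<i>^s) (fst p) (fst q) $ fst a * cnj (zvec (\<i>^s) (fst p) (fst q) $ fst b))) *
        ((\<i>^t/4) * (zvec (\<i>^t) (snd p) (snd q) $ snd a * cnj (zvec (\<i>^t) (snd p) (snd q) $ snd b)))))"
      by (simp add: Iset_def sum_times Xm_def coef_def mult_ac del: zvec_nth)
    also have "\<dots> = (\<Sum>p\<in>UNIV. \<Sum>q\<in>UNIV. y$p$q * ((\<Sum>s<4. (\<i>^s/4) * (zvec (\<i>^s) (fst p) (fst q) $ fst a * cnj (zvec (\<i>^s) (fst p) (fst q) $ fst b))) *
        (\<Sum>t<4. (\<i>^t/4) * (zvec (\<i>^t) (snd p) (snd q) $ snd a * cnj (zvec (\<i>^t) (snd p) (snd q) $ snd b)))))"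
      by (simp only: sum_product, simp only: sum_distrib_left)
    also have "\<dots> = (\<Sum>p\<in>UNIV. \<Sum>q\<in>UNIV. y$p$q * ((if fst a = fst p \<and> fst b = fst q then 1 else 0) * (if snd a = snd p \<and> snd b = snd q then 1 else 0)))"
      by (simp only: pol)
    also have "\<dots> = (\<Sum>p\<in>UNIV. \<Sum>q\<in>UNIV. y$p$q * (if p = a \<and> q = b then 1 else 0))"
      by (simp only: ifs_prod)
    also have "\<dots> = (\<Sum>p\<in>UNIV. if p = a then y $ a $ b else 0)"
      by (intro sum.cong refl, case_tac "x = a") (simp_all add: if_times sum.delta' cong: if_cong)
    also have "\<dots> = y $ a $ b"
      by (simp add: sum.delta')
    finally show ?thesis .
  qed
  then show ?thesis by (simp add: vec_eq_iff)
qed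


lemma sa_real_coef:
  assumes "mc_adj y = y" "y = (\<Sum>m\<in>I. smat (c m) (X m))" "\<And>m. m \<in> I \<Longrightarrow> mc_adj (X m) = X m"
  shows "y = (\<Sum>m\<in>I. Re (c m) *\<^sub>R X m)"
proof -
  have "y $ a $ b = (\<Sum>m\<in>I. Re (c m) *\<^sub>R X m) $ a $ b" for a b
  proof -
    have X: "X m $ a $ b = cnj (X m $ b $ a)" if "m \<in> I" for m
    proof -
      have "mc_adj (X m) $ a $ b = X m $ a $ b" using assms(3)[OF that] by simp
      then show ?thesis by simp
    qed
    have A: "y $ a $ b = (\<Sum>m\<in>I. c m * X m $ a $ b)"
      by (subst assms(2)) simp
    have "y $ a $ b = mc_adj y $ a $ b" using assms(1) by simp
    also have "\<dots> = cnj (\<Sum>m\<in>I. c m * X m $ b $ a)" by (subst assms(2)) simp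
    also have "\<dots> = (\<Sum>m\<in>I. cnj (c m) * X m $ a $ b)"
      by (simp add: X)
    finally have B: "y $ a $ b = (\<Sum>m\<in>I. cnj (c m) * X m $ a $ b)" .
    have "y $ a $ b = ((\<Sum>m\<in>I. c m * X m $ a $ b) + (\<Sum>m\<in>I. cnj (c m) * X m $ a $ b)) / 2"
      using A B by simp
    also have "\<dots> = (\<Sum>m\<in>I. ((c m + cnj (c m)) / 2) * X m $ a $ b)"
      by (simp add: sum.distrib[symmetric] sum_divide_distrib algebra_simps)
    also have "\<dots> = (\<Sum>m\<in>I. of_real (Re (c m)) * X m $ a $ b)"
      by (simp add: complex_add_cnj)
    finally show ?thesis by (simp del: vector_scaleR_component)
  qed
  then show ?thesis by (simp add: vec_eq_iff)
qed

lemma P0_comb: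
  assumes posC: "\<forall>\<alpha>\<in>C. positive_map \<alpha>" and e: "e \<in> P0 C" and T: "0 \<le> T"
  shows "finite I \<Longrightarrow> (\<forall>m\<in>I. X m \<in> P0 C \<and> T *\<^sub>R e - X m \<in> P0 C) \<Longrightarrow>
    (\<Sum>m\<in>I. r m *\<^sub>R X m) + (T * (\<Sum>m\<in>I. \<bar>r m\<bar>)) *\<^sub>R e \<in> P0 C"
proof (induction I rule: finite_induct)
  case empty
  then show ?case using P0_zero[OF posC] by simp
next
  case (insert x F)
  have X: "X x \<in> P0 C" "T *\<^sub>R e - X x \<in> P0 C" using insert.prems by auto
  have IH: "(\<Sum>m\<in>F. r m *\<^sub>R X m) + (T * (\<Sum>m\<in>F. \<bar>r m\<bar>)) *\<^sub>R e \<in> P0 C"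
    using insert.IH insert.prems by auto
  have one: "r x *\<^sub>R X x + (T * \<bar>r x\<bar>) *\<^sub>R e \<in> P0 C"
  proof (cases "0 \<le> r x")
    case True
    have eq: "r x *\<^sub>R X x + (T * \<bar>r x\<bar>) *\<^sub>R e = r x *\<^sub>R (X x + T *\<^sub>R e)"
      using True by (simp add: algebra_simps)
    have "X x + T *\<^sub>R e \<in> P0 C"
      by (rule P0_add[OF posC X(1) P0_scaleR[OF posC e T]])
    then show ?thesis unfolding eq by (rule P0_scaleR[OF posC _ True])
  next
    case False
    have eq: "r x *\<^sub>R X x + (T * \<bar>r x\<bar>) *\<^sub>R e = (- r x) *\<^sub>R (T *\<^sub>R e - X x)"
      using False by (simp add: algebra_simps)
    have "0 \<le> - r x" using False by simp
    then show ?thesis unfolding eq by (rule P0_scaleR[OF posC X(2)])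
  qed
  have "(\<Sum>m\<in>insert x F. r m *\<^sub>R X m) + (T * (\<Sum>m\<in>insert x F. \<bar>r m\<bar>)) *\<^sub>R e =
        (r x *\<^sub>R X x + (T * \<bar>r x\<bar>) *\<^sub>R e) + ((\<Sum>m\<in>F. r m *\<^sub>R X m) + (T * (\<Sum>m\<in>F. \<bar>r m\<bar>)) *\<^sub>R e)"
    using insert.hyps by (simp add: algebra_simps)
  then show ?case using P0_add[OF posC one IH] by simp
qed

lemma kron_split: "kron (diagm (\<lambda>_. 4)) (diagm (\<lambda>_. 4)) - kron A B =
   kron (diagm (\<lambda>_. 4) - A) (diagm (\<lambda>_. 4)) + kron A (diagm (\<lambda>_. 4) - B)"
  by (simp add: vec_eq_iff algebra_simps)

lemma eunit16: "16 *\<^sub>R (eunit :: ('n::finite \<times> 'k::finite) cmat) = kron (diagm (\<lambda>_. 4)) (diagm (\<lambda>_. 4))"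
  by (auto simp: vec_eq_iff eunit_def mat_def scaleR_conv_of_real)

lemma mc_adj_Xm: "mc_adj (Xm m) = Xm m"
  by (cases m) (simp add: Xm_def mc_adj_kron mc_adj_outer)

lemma mc_adj_eunit: "mc_adj eunit = eunit"
  by (simp add: eunit_def mc_adj_kron mc_adj_mat1)

context fixes C :: "('k::finite cmat \<Rightarrow> 'k cmat) set" assumes posC: "\<forall>\<alpha>\<in>C. positive_map \<alpha>"
begin

lemma eunit_P0: "(eunit :: ('n::finite \<times> 'k) cmat) \<in> P0 C"
proof -
  have "cpsd (id_tensor \<alpha> (eunit :: ('n \<times> 'k) cmat))" if "\<alpha> \<in> C" for \<alpha>
  proof -
    have pa: "positive_map \<alpha>" using posC that by auto
    have "cpsd (diagm (\<lambda>_. 1::real))" by (rule cpsd_diagm) simp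
    then have "cpsd (\<alpha> (mat 1))" using pa unfolding positive_map_def mat1_diagm by blast
    then show ?thesis
      unfolding eunit_def linm.id_tensor_kron[OF pos_lin[OF pa]]
      by (subst mat1_diagm, intro cpsd_kron_diagm) auto
  qed
  then show ?thesis by (simp add: P0_def mc_adj_eunit)
qed

lemma Xm_P0: "Xm m \<in> P0 C"
proof -
  obtain p q s t where m: "m = (p,q,s,t)" by (cases m) auto
  have "cpsd (id_tensor \<alpha> (Xm m))" if "\<alpha> \<in> C" for \<alpha>
  proof -
    have pa: "positive_map \<alpha>" using posC that by auto
    show ?thesis unfolding m Xm_def using pa
      by (simp add: linm.id_tensor_kron[OF pos_lin[OF pa]] cpsd_kron_outer positive_map_def cpsd_outer)
  qed
  then show ?thesis by (simp add: P0_def mc_adj_Xm)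
qed

lemma Xm_P0': "16 *\<^sub>R eunit - Xm m \<in> P0 C"
proof -
  obtain p q s t where m: "m = (p,q,s,t)" by (cases m) auto
  define z where "z = zvec (\<i>^s) (fst p) (fst q)"
  define w where "w = zvec (\<i>^t) (snd p) (snd q)"
  have eq: "16 *\<^sub>R eunit - Xm m = kron (diagm (\<lambda>_. 4) - outer z) (diagm (\<lambda>_. 4)) + kron (outer z) (diagm (\<lambda>_. 4) - outer w)"
    unfolding eunit16 m Xm_def z_def w_def by (simp add: kron_split)
  have "cpsd (id_tensor \<alpha> (16 *\<^sub>R eunit - Xm m))" if "\<alpha> \<in> C" for \<alpha>
  proof -
    have pa: "positive_map \<alpha>" using posC that by auto
    interpret linm \<alpha> by (rule pos_lin[OF pa])
    have "cpsd (diagm (\<lambda>_. 4::real))" by (rule cpsd_diagm) simp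
    then have q1: "cpsd (\<alpha> (diagm (\<lambda>_. 4)))" using pa unfolding positive_map_def by blast
    have q2: "cpsd (\<alpha> (diagm (\<lambda>_. 4) - outer w))" using pa cpsd_quarter[OF cnj_ipow] unfolding w_def
      positive_map_def by blast
    have k1: "cpsd (kron (diagm (\<lambda>_. 4) - outer z) (\<alpha> (diagm (\<lambda>_. 4))))"
      unfolding z_def quarter[OF cnj_ipow] kron_add_left
      by (intro cpsd_add cpsd_kron_diagm cpsd_kron_outer q1) auto
    show ?thesis unfolding eq id_tensor_add id_tensor_kron
      by (intro cpsd_add k1 cpsd_kron_outer q2)
  qed
  moreover have "mc_adj (16 *\<^sub>R eunit - Xm m) = 16 *\<^sub>R eunit - Xm m"
    by (simp add: mc_adj_diff mc_adj_scaleR mc_adj_eunit mc_adj_Xm)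
  ultimately show ?thesis by (simp add: P0_def)
qed

lemma coef_bound: "\<bar>Re (coef y m)\<bar> \<le> norm y"
proof -
  obtain p q s t where m: "m = (p,q,s,t)" by (cases m) auto
  have "\<bar>Re (coef y m)\<bar> \<le> norm (coef y m)" by (rule abs_Re_le_cmod)
  also have "\<dots> = norm (y $ p $ q) / 16" by (simp add: m coef_def norm_mult norm_divide norm_power)
  also have "\<dots> \<le> norm (y $ p $ q)" by simp
  also have "\<dots> \<le> norm (y $ p)" by (rule Finite_Cartesian_Product.norm_nth_le)
  also have "\<dots> \<le> norm y" by (rule Finite_Cartesian_Product.norm_nth_le)
  finally show ?thesis .
qed

lemma order_unit: "\<exists>M\<ge>0. \<forall>y::('n::finite \<times> 'k) cmat. mc_adj y = y \<longrightarrow> y + (M * norm y) *\<^sub>R eunit \<in> P0 C"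
proof (intro exI[of _ "16 * real (card (Iset :: (('n \<times> 'k) \<times> ('n \<times> 'k) \<times> nat \<times> nat) set))"] conjI allI impI)
  show "0 \<le> 16 * real (card (Iset :: (('n \<times> 'k) \<times> ('n \<times> 'k) \<times> nat \<times> nat) set))" by simp
  fix y :: "('n \<times> 'k) cmat"
  assume sa: "mc_adj y = y"
  have y: "y = (\<Sum>m\<in>Iset. Re (coef y m) *\<^sub>R Xm m)"
    by (rule sa_real_coef[OF sa decomp mc_adj_Xm])
  have "(\<Sum>m\<in>Iset. Re (coef y m) *\<^sub>R Xm m) + (16 * (\<Sum>m\<in>Iset. \<bar>Re (coef y m)\<bar>)) *\<^sub>R eunit \<in> P0 C"
    by (rule P0_comb[OF posC eunit_P0 _ finite_Iset]) (auto simp: Xm_P0 Xm_P0')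
  then have A: "y + (16 * (\<Sum>m\<in>Iset. \<bar>Re (coef y m)\<bar>)) *\<^sub>R eunit \<in> P0 C" using y by simp
  have bnd: "(\<Sum>m\<in>Iset. \<bar>Re (coef y m)\<bar>) \<le> real (card (Iset :: (('n \<times> 'k) \<times> ('n \<times> 'k) \<times> nat \<times> nat) set)) * norm y"
    using sum_bounded_above[of Iset "\<lambda>m. \<bar>Re (coef y m)\<bar>" "norm y", OF coef_bound] by simp
  have B: "(16 * real (card (Iset :: (('n \<times> 'k) \<times> ('n \<times> 'k) \<times> nat \<times> nat) set)) * norm y - 16 * (\<Sum>m\<in>Iset. \<bar>Re (coef y m)\<bar>)) *\<^sub>R eunit \<in> P0 C"
    by (rule P0_scaleR[OF posC eunit_P0]) (use bnd in simp)
  show "y + (16 * real (card (Iset :: (('n \<times> 'k) \<times> ('n \<times> 'k) \<times> nat \<times> nat) set)) * norm y) *\<^sub>R eunit \<in> P0 C"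
    using P0_add[OF posC A B] by (simp add: algebra_simps)
qed

end


lemma sum_split_nat: "(\<Sum>i<m1+m2. f i) = (\<Sum>i<m1. f i) + (\<Sum>i<m2. f (m1 + i))" for m1 m2 :: nat
  by (induction m2) (simp_all add: add.assoc)

definition cat :: "nat \<Rightarrow> (nat \<Rightarrow> 'a) \<Rightarrow> (nat \<Rightarrow> 'a) \<Rightarrow> nat \<Rightarrow> 'a" where
  "cat m1 f g i = (if i < m1 then f i else g (i - m1))"

lemma sum_cat: "(\<Sum>i<m1+m2. h (cat m1 c1 c2 i) (cat m1 a1 a2 i) (cat m1 b1 b2 i)) =
   (\<Sum>i<m1. h (c1 i) (a1 i) (b1 i)) + (\<Sum>i<m2. h (c2 i) (a2 i) (b2 i))" for m1 m2 :: nat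
  by (simp add: sum_split_nat cat_def)

definition FRel :: "'n::finite cmat set \<Rightarrow> ('n cmat \<Rightarrow> 'k::finite cmat) \<Rightarrow> ('n \<times> 'k) cmat \<Rightarrow> complex \<Rightarrow> bool" where
  "FRel B \<phi> x s \<longleftrightarrow> (\<exists>(m::nat) c a b. (\<forall>i<m. a i \<in> B) \<and> x = (\<Sum>i<m. smat (c i) (kron (a i) (b i))) \<and>
      s = (\<Sum>i<m. c i * mtr (\<phi> (a i) ** transpose (b i))))"

lemma Rel_add: assumes "FRel B \<phi> x s" "FRel B \<phi> y t" shows "FRel B \<phi> (x + y) (s + t)"
proof -
  obtain m1 :: nat and c1 a1 b1 where 1: "\<forall>i<m1. a1 i \<in> B" "x = (\<Sum>i<m1. smat (c1 i) (kron (a1 i) (b1 i)))"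
    "s = (\<Sum>i<m1. c1 i * mtr (\<phi> (a1 i) ** transpose (b1 i)))" using assms(1) unfolding FRel_def by blast
  obtain m2 :: nat and c2 a2 b2 where 2: "\<forall>i<m2. a2 i \<in> B" "y = (\<Sum>i<m2. smat (c2 i) (kron (a2 i) (b2 i)))"
    "t = (\<Sum>i<m2. c2 i * mtr (\<phi> (a2 i) ** transpose (b2 i)))" using assms(2) unfolding FRel_def by blast
  show ?thesis unfolding FRel_def
  proof (intro exI conjI)
    show "\<forall>i<m1+m2. cat m1 a1 a2 i \<in> B" using 1(1) 2(1) by (auto simp: cat_def)
    show "x + y = (\<Sum>i<m1+m2. smat (cat m1 c1 c2 i) (kron (cat m1 a1 a2 i) (cat m1 b1 b2 i)))"
      by (subst sum_cat[where h = "\<lambda>c a b. smat c (kron a b)"]) (simp add: 1 2)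
    show "s + t = (\<Sum>i<m1+m2. cat m1 c1 c2 i * mtr (\<phi> (cat m1 a1 a2 i) ** transpose (cat m1 b1 b2 i)))"
      by (subst sum_cat[where h = "\<lambda>c a b. c * mtr (\<phi> a ** transpose b)"]) (simp add: 1 2)
  qed
qed

lemma Rel_smat: assumes "FRel B \<phi> x s" shows "FRel B \<phi> (smat d x) (d * s)"
proof -
  obtain m :: nat and c a b where 1: "\<forall>i<m. a i \<in> B" "x = (\<Sum>i<m. smat (c i) (kron (a i) (b i)))"
    "s = (\<Sum>i<m. c i * mtr (\<phi> (a i) ** transpose (b i)))" using assms(1) unfolding FRel_def by blast
  show ?thesis unfolding FRel_def
  proof (intro exI conjI)
    show "\<forall>i<m. a i \<in> B" by (rule 1(1))
    show "smat d x = (\<Sum>i<m. smat (d * c i) (kron (a i) (b i)))" by (simp add: 1 smat_sum smat_smat)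
    show "d * s = (\<Sum>i<m. (d * c i) * mtr (\<phi> (a i) ** transpose (b i)))" by (simp add: 1 sum_distrib_left mult.assoc)
  qed
qed

lemma Rel_scaleR: "FRel B \<phi> x s \<Longrightarrow> FRel B \<phi> (r *\<^sub>R x) (of_real r * s)"
  using Rel_smat[of B \<phi> x s "of_real r"] by (simp add: smat_scaleR)

lemma Rel_basic: "a \<in> B \<Longrightarrow> FRel B \<phi> (kron a b) (mtr (\<phi> a ** transpose b))"
  unfolding FRel_def by (rule exI[of _ 1], rule exI[of _ "\<lambda>_. 1"], rule exI[of _ "\<lambda>_. a"], rule exI[of _ "\<lambda>_. b"]) simp

lemma Rel_zero: "FRel B \<phi> 0 0"
  unfolding FRel_def by (rule exI[of _ 0]) simp

lemma Rel_adj: assumes "FRel B \<phi> x s" "\<forall>a\<in>B. mc_adj a \<in> B" shows "\<exists>s'. FRel B \<phi> (mc_adj x) s'"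
proof -
  obtain m :: nat and c a b where 1: "\<forall>i<m. a i \<in> B" "x = (\<Sum>i<m. smat (c i) (kron (a i) (b i)))"
    using assms(1) unfolding FRel_def by blast
  have "FRel B \<phi> (mc_adj x) (\<Sum>i<m. cnj (c i) * mtr (\<phi> (mc_adj (a i)) ** transpose (mc_adj (b i))))"
    unfolding FRel_def
  proof (intro exI conjI)
    show "\<forall>i<m. mc_adj (a i) \<in> B" using 1(1) assms(2) by auto
    show "mc_adj x = (\<Sum>i<m. smat (cnj (c i)) (kron (mc_adj (a i)) (mc_adj (b i))))"
      by (simp add: 1 mc_adj_sum mc_adj_smat mc_adj_kron)
  qed simp
  then show ?thesis by blast
qed

lemma Rel_pos: assumes "FRel B \<phi> x s" "x \<in> P0 C" "C_positive C B \<phi>" shows "Im s = 0 \<and> 0 \<le> Re s"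
proof -
  obtain m :: nat and c a b where 1: "\<forall>i<m. a i \<in> B" "x = (\<Sum>i<m. smat (c i) (kron (a i) (b i)))"
    "s = (\<Sum>i<m. c i * mtr (\<phi> (a i) ** transpose (b i)))" using assms(1) unfolding FRel_def by blast
  have "x \<in> tensor_space B" unfolding tensor_space_def cspan_def
    by (rule CollectI, rule exI[of _ m], rule exI[of _ c], rule exI[of _ "\<lambda>i. kron (a i) (b i)"]) (use 1 in auto)
  then have "x \<in> P_set B C" using assms(2) by (simp add: P_set_def P0_def)
  then show ?thesis using assms(3) 1 unfolding C_positive_def Let_def by blast
qed


definition hre :: "'n::finite cmat \<Rightarrow> 'n cmat" where "hre x = (1/2) *\<^sub>R (x + mc_adj x)"
definition him :: "'n::finite cmat \<Rightarrow> 'n cmat" where "him x = smat (- \<i>/2) (x - mc_adj x)"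
definition Emat :: "'k::finite \<Rightarrow> 'k \<Rightarrow> 'k cmat" where "Emat k l = (\<chi> r s. if r = k \<and> s = l then 1 else 0)"
lemma Emat_nth[simp]: "Emat k l $ r $ s = (if r = k \<and> s = l then 1 else 0)" by (simp add: Emat_def)

lemma hre_add: "hre (x + y) = hre x + hre y" by (simp add: hre_def mc_adj_add algebra_simps)
lemma him_add: "him (x + y) = him x + him y" by (simp add: him_def mc_adj_add smat_add[symmetric] algebra_simps)
lemma hre_smat: "hre (smat c x) = Re c *\<^sub>R hre x - Im c *\<^sub>R him x"
  by (simp add: vec_eq_iff hre_def him_def complex_eq_iff del: vector_scaleR_component) (simp add: field_simps)
lemma him_smat: "him (smat c x) = Im c *\<^sub>R hre x + Re c *\<^sub>R him x"
  by (simp add: vec_eq_iff hre_def him_def complex_eq_iff del: vector_scaleR_component) (simp add: field_simps)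
lemma smat_zero_right[simp]: "smat c 0 = 0" by (simp add: vec_eq_iff)
lemma sum_delta2: "(\<Sum>k\<in>UNIV. \<Sum>l\<in>UNIV. if k = a \<and> l = b then f k l else 0) = (f a b :: complex)"
  for a :: "'a::finite" and b :: "'b::finite"
proof -
  have "(\<Sum>l\<in>UNIV. if k = a \<and> l = b then f k l else 0) = (if k = a then f k b else 0)" for k
    by (cases "k = a") (simp_all add: sum.delta)
  then show ?thesis by (simp add: sum.delta)
qed
lemma hre_sa: "mc_adj x = x \<Longrightarrow> hre x = x" by (simp add: hre_def vec_eq_iff del: vector_scaleR_component)
lemma him_sa: "mc_adj x = x \<Longrightarrow> him x = 0" by (simp add: him_def)
lemma hre_adj: "mc_adj (hre x) = hre x" by (simp add: vec_eq_iff hre_def del: vector_scaleR_component)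
lemma him_adj: "mc_adj (him x) = him x" by (simp add: vec_eq_iff him_def algebra_simps)

lemma mtr_transpose: "mtr (M ** transpose b) = (\<Sum>k\<in>UNIV. \<Sum>l\<in>UNIV. M $ k $ l * b $ k $ l)"
  by (simp add: mtr_def matrix_matrix_mult_def transpose_def)

lemma mtr_E: "mtr (M ** transpose (Emat k l)) = M $ k $ l"
  by (simp add: mtr_transpose if_times sum_delta2 cong: if_cong)

lemma sum_delta2': "(\<Sum>k\<in>UNIV. \<Sum>l\<in>UNIV. if a = k \<and> b = l then f k l else 0) = (f a b :: complex)"
  for a :: "'a::finite" and b :: "'b::finite"
  using sum_delta2[of a b f] by (simp add: eq_commute[of a] eq_commute[of b])

lemma kron_expand: "kron a b = (\<Sum>k\<in>UNIV. \<Sum>l\<in>UNIV. smat (b $ k $ l) (kron a (Emat k l)))"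
proof -
  have "(\<Sum>k\<in>UNIV. \<Sum>l\<in>UNIV. smat (b $ k $ l) (kron a (Emat k l))) $ p $ q = kron a b $ p $ q" for p q
    by (simp add: if_times sum_delta2' mult.commute cong: if_cong)
  then show ?thesis by (simp add: vec_eq_iff)
qed

lemma kron_smat_left: "kron (smat c a) b = smat c (kron a b)" by (simp add: vec_eq_iff mult.assoc)

locale gfun =
  fixes g :: "('n::finite \<times> 'k::finite) cmat \<Rightarrow> real"
  assumes g_add: "g (x + y) = g x + g y" and g_scaleR: "g (r *\<^sub>R x) = r * g x"
begin

lemma g_zero: "g 0 = 0" using g_scaleR[of 0 0] by simp
lemma g_diff: "g (x - y) = g x - g y" using g_add[of "x - y" y] by simp

definition F :: "('n \<times> 'k) cmat \<Rightarrow> complex" where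
  "F x = of_real (g (hre x)) + \<i> * of_real (g (him x))"

lemma F_add: "F (x + y) = F x + F y" by (simp add: F_def hre_add him_add g_add algebra_simps)
lemma F_smat: "F (smat c x) = c * F x"
  by (simp add: F_def hre_smat him_smat g_add g_diff g_scaleR complex_eq_iff algebra_simps)
lemma F_zero: "F 0 = 0" using F_smat[of 0 0] by simp
lemma F_sum: "F (sum f S) = (\<Sum>i\<in>S. F (f i))"
proof (cases "finite S")
  case True then show ?thesis by (induction S rule: finite_induct) (simp_all add: F_zero F_add)
next
  case False then show ?thesis by (simp add: F_zero)
qed
lemma F_sa: "mc_adj x = x \<Longrightarrow> F x = of_real (g x)"
  by (simp add: F_def hre_sa him_sa g_zero)

definition psi :: "'n cmat \<Rightarrow> 'k cmat" where
  "psi a = (\<chi> k l. F (kron a (Emat k l)))"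

lemma psi_nth: "psi a $ k $ l = F (kron a (Emat k l))" by (simp add: psi_def)

lemma psi_clinear: "clinear_on UNIV psi"
  unfolding clinear_on_def
  by (simp add: vec_eq_iff psi_nth kron_add_left F_add kron_smat_left F_smat)

lemma mtr_psi: "mtr (psi a ** transpose b) = F (kron a b)"
proof -
  have "mtr (psi a ** transpose b) = (\<Sum>k\<in>UNIV. \<Sum>l\<in>UNIV. F (kron a (Emat k l)) * b $ k $ l)"
    by (simp add: mtr_transpose psi_nth)
  also have "\<dots> = F (kron a b)"
    by (subst kron_expand) (simp add: F_sum F_smat mult.commute)
  finally show ?thesis .
qed

end


lemma smat_m1: "x + smat (-1) y = x - y" by (simp add: vec_eq_iff)
lemma smat_m1': "smat (-1) x = - x" by (simp add: vec_eq_iff)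

theorem corollary2:
  fixes C :: "('k::finite cmat \<Rightarrow> 'k cmat) set"
    and B :: "('n::finite) cmat set"
    and \<phi> :: "'n cmat \<Rightarrow> 'k cmat"
  assumes "mapping_cone C"
    and "unital_cstar_subalg B"
    and "clinear_on B \<phi>"
    and "C_positive C B \<phi>"
  shows "\<exists>\<psi>. clinear_on UNIV \<psi> \<and> C_positive C UNIV \<psi> \<and> (\<forall>a\<in>B. \<psi> a = \<phi> a)"
proof -
  have posC: "\<forall>\<alpha>\<in>C. positive_map \<alpha>" using assms(1) by (simp add: mapping_cone_def)
  have Bone: "mat 1 \<in> B" and Badj: "\<forall>a\<in>B. mc_adj a \<in> B" using assms(2) by (simp_all add: unital_cstar_subalg_def)
  obtain M where M0: "0 \<le> M" and MU: "\<And>y. mc_adj y = y \<Longrightarrow> y + (M * norm y) *\<^sub>R (eunit :: ('n \<times> 'k) cmat) \<in> P0 C"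
    using order_unit[OF posC, where 'n = 'n] by blast
  define se where "se = mtr (\<phi> (mat 1) ** transpose (mat 1))"
  have Re: "FRel B \<phi> (eunit :: ('n \<times> 'k) cmat) se" unfolding eunit_def se_def by (rule Rel_basic[OF Bone])
  have pos: "\<And>x s. FRel B \<phi> x s \<Longrightarrow> x \<in> P0 C \<Longrightarrow> Im s = 0 \<and> 0 \<le> Re s" using Rel_pos assms(4) by blast
  have se: "Im se = 0 \<and> 0 \<le> Re se" using pos[OF Re eunit_P0[OF posC]] .
  have ImR: "Im s = 0" if R: "FRel B \<phi> x s" and sa: "mc_adj x = x" for x s
  proof -
    define t where "t = M * norm x"
    have "x + t *\<^sub>R eunit \<in> P0 C" using MU[OF sa] by (simp add: t_def)
    moreover have "FRel B \<phi> (x + t *\<^sub>R eunit) (s + of_real t * se)" by (intro Rel_add Rel_scaleR R Re)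
    ultimately have "Im (s + of_real t * se) = 0" using pos by blast
    then show "Im s = 0" using se by simp
  qed
  define D :: "(('n \<times> 'k) cmat \<times> real) set" where
    "D = {(x - p, Re s) | x s p. FRel B \<phi> x s \<and> mc_adj x = x \<and> p \<in> P0 C}"
  have D0: "(0, 0) \<in> D" unfolding D_def
    using Rel_zero[of B \<phi>] P0_zero[OF posC] by force
  have Dscale: "t *\<^sub>R d \<in> D" if "d \<in> D" "0 \<le> t" for d t
  proof -
    obtain x s p where d: "d = (x - p, Re s)" "FRel B \<phi> x s" "mc_adj x = x" "p \<in> P0 C"
      using \<open>d \<in> D\<close> unfolding D_def by blast
    have "t *\<^sub>R d = (t *\<^sub>R x - t *\<^sub>R p, Re (of_real t * s))" by (simp add: d algebra_simps)
    moreover have "FRel B \<phi> (t *\<^sub>R x) (of_real t * s)" by (rule Rel_scaleR[OF d(2)])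
    moreover have "mc_adj (t *\<^sub>R x) = t *\<^sub>R x" by (simp add: mc_adj_scaleR d(3))
    moreover have "t *\<^sub>R p \<in> P0 C" by (rule P0_scaleR[OF posC d(4) that(2)])
    ultimately show ?thesis unfolding D_def by blast
  qed
  have cvx: "convex D"
    unfolding convex_def
  proof (intro ballI allI impI)
    fix d1 d2 and u v :: real assume d1: "d1 \<in> D" and d2: "d2 \<in> D" and uv: "0 \<le> u" "0 \<le> v" "u + v = 1"
    obtain x1 s1 p1 where 1: "d1 = (x1 - p1, Re s1)" "FRel B \<phi> x1 s1" "mc_adj x1 = x1" "p1 \<in> P0 C"
      using d1 unfolding D_def by blast
    obtain x2 s2 p2 where 2: "d2 = (x2 - p2, Re s2)" "FRel B \<phi> x2 s2" "mc_adj x2 = x2" "p2 \<in> P0 C"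
      using d2 unfolding D_def by blast
    have "u *\<^sub>R d1 + v *\<^sub>R d2 = ((u *\<^sub>R x1 + v *\<^sub>R x2) - (u *\<^sub>R p1 + v *\<^sub>R p2), Re (of_real u * s1 + of_real v * s2))"
      by (simp add: 1 2 algebra_simps)
    moreover have "FRel B \<phi> (u *\<^sub>R x1 + v *\<^sub>R x2) (of_real u * s1 + of_real v * s2)"
      by (intro Rel_add Rel_scaleR 1(2) 2(2))
    moreover have "mc_adj (u *\<^sub>R x1 + v *\<^sub>R x2) = u *\<^sub>R x1 + v *\<^sub>R x2"
      by (simp add: mc_adj_add mc_adj_scaleR 1(3) 2(3))
    moreover have "u *\<^sub>R p1 + v *\<^sub>R p2 \<in> P0 C"
      by (intro P0_add[OF posC] P0_scaleR[OF posC] 1(4) 2(4) uv(1) uv(2))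
    ultimately show "u *\<^sub>R d1 + v *\<^sub>R d2 \<in> D" unfolding D_def by blast
  qed
  have notin: "(0, -1) \<notin> closure D"
  proof
    assume "(0, -1) \<in> closure D"
    define K where "K = M * Re se"
    have K0: "0 \<le> K" using M0 se by (simp add: K_def)
    define \<epsilon> where "\<epsilon> = 1 / (2 * (1 + K))"
    have \<epsilon>0: "0 < \<epsilon>" using K0 by (simp add: \<epsilon>_def)
    obtain d where dD: "d \<in> D" and dd: "dist d (0, -1) < \<epsilon>"
      using \<open>(0, -1) \<in> closure D\<close> \<epsilon>0 unfolding closure_approachable by blast
    obtain x s p where d: "d = (x - p, Re s)" "FRel B \<phi> x s" "mc_adj x = x" "p \<in> P0 C"
      using dD unfolding D_def by blast
    define y where "y = x - p"
    have psa: "mc_adj p = p" using d(4) by (simp add: P0_def)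
    have ysa: "mc_adj y = y" by (simp add: y_def mc_adj_diff d(3) psa)
    have ny: "norm y < \<epsilon>"
      using dist_fst_le[of d "(0, -1)"] dd by (simp add: d y_def dist_norm)
    have rs: "\<bar>Re s + 1\<bar> < \<epsilon>"
      using dist_snd_le[of d "(0, -1)"] dd by (simp add: d dist_real_def)
    define t where "t = M * norm y"
    have "y + t *\<^sub>R eunit \<in> P0 C" using MU[OF ysa] by (simp add: t_def)
    then have "p + (y + t *\<^sub>R eunit) \<in> P0 C" by (rule P0_add[OF posC d(4)])
    then have xt: "x + t *\<^sub>R eunit \<in> P0 C" by (simp add: y_def)
    have "FRel B \<phi> (x + t *\<^sub>R eunit) (s + of_real t * se)" by (intro Rel_add Rel_scaleR d(2) Re)
    then have "0 \<le> Re (s + of_real t * se)" using pos xt by blast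
    then have A: "0 \<le> Re s + t * Re se" by simp
    have "t * Re se = norm y * K" by (simp add: t_def K_def)
    also have "\<dots> \<le> \<epsilon> * K" using ny K0 by (simp add: mult_right_mono)
    finally have B: "t * Re se \<le> \<epsilon> * K" .
    have "1 < \<epsilon> * (1 + K)" using A B rs by (simp add: algebra_simps)
    moreover have "\<epsilon> * (1 + K) = 1/2" using K0 by (simp add: \<epsilon>_def)
    ultimately show False by simp
  qed
  obtain a bb where ab: "inner a (0, -1) < bb" "\<forall>x\<in>closure D. bb < inner a x"
    using separating_hyperplane_closed_point[OF convex_closure[OF cvx] closed_closure notin] by blast
  obtain h c where a: "a = (h, c)" by (cases a)
  have bb0: "bb < 0" using ab(2) D0 closure_subset[of D] by (force simp: a)
  have nonneg: "0 \<le> inner a d" if dD: "d \<in> D" for d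
  proof (rule ccontr)
    assume neg: "\<not> 0 \<le> inner a d"
    define t where "t = 2 * bb / inner a d"
    have t0: "0 \<le> t" using neg bb0 by (simp add: t_def divide_nonpos_neg)
    have "t *\<^sub>R d \<in> closure D" using Dscale[OF dD t0] closure_subset by blast
    then have "bb < inner a (t *\<^sub>R d)" using ab(2) by blast
    also have "inner a (t *\<^sub>R d) = 2 * bb" using neg by (simp add: t_def)
    finally show False using bb0 by simp
  qed
  have c0: "0 < c" using ab(1) bb0 by (simp add: a)
  define g :: "('n \<times> 'k) cmat \<Rightarrow> real" where "g x = - inner h x / c" for x
  interpret G: gfun g
    by unfold_locales (simp_all add: g_def inner_add_right inner_scaleR_right add_divide_distrib diff_divide_distrib)
  have g_rel: "g x = Re s" if R: "FRel B \<phi> x s" and sa: "mc_adj x = x" for x s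
  proof -
    have "(x - 0, Re s) \<in> D" unfolding D_def using R sa P0_zero[OF posC] by blast
    from nonneg[OF this] have 1: "0 \<le> inner h x + c * Re s" by (simp add: a)
    have R': "FRel B \<phi> (- x) (- s)" using Rel_smat[OF R, of "-1"] by (simp add: smat_m1')
    have "mc_adj (- x) = - x" using sa by (simp add: vec_eq_iff)
    then have "(- x - 0, Re (- s)) \<in> D" unfolding D_def using R' P0_zero[OF posC] by blast
    from nonneg[OF this] have 2: "0 \<le> - inner h x - c * Re s" by (simp add: a)
    have "inner h x = - c * Re s" using 1 2 by simp
    then show ?thesis using c0 by (simp add: g_def)
  qed
  have g_pos: "0 \<le> g p" if "p \<in> P0 C" for p
  proof -
    have "(0 - p, Re 0) \<in> D" unfolding D_def using Rel_zero[of B \<phi>] that by force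
    from nonneg[OF this] have "0 \<le> - inner h p" by (simp add: a)
    then show ?thesis using c0 by (simp add: g_def divide_nonpos_pos)
  qed
  have F_rel: "G.F x = s" if R: "FRel B \<phi> x s" for x s
  proof -
    obtain s' where R': "FRel B \<phi> (mc_adj x) s'" using Rel_adj[OF R Badj] by blast
    define A where "A = of_real (1/2) * (s + s')"
    define Bv where "Bv = (- \<i>/2) * (s + (-1) * s')"
    have RA: "FRel B \<phi> (hre x) A" unfolding hre_def A_def by (intro Rel_scaleR Rel_add R R')
    have RB: "FRel B \<phi> (him x) Bv" unfolding him_def Bv_def smat_m1[symmetric]
      by (intro Rel_smat Rel_add R R')
    have IA: "Im A = 0" by (rule ImR[OF RA hre_adj])
    have IB: "Im Bv = 0" by (rule ImR[OF RB him_adj])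
    have "G.F x = of_real (Re A) + \<i> * of_real (Re Bv)"
      by (simp add: G.F_def g_rel[OF RA hre_adj] g_rel[OF RB him_adj])
    also have "\<dots> = A + \<i> * Bv" using IA IB by (simp add: complex_eq_iff)
    also have "\<dots> = s" by (simp add: A_def Bv_def field_simps)
    finally show ?thesis .
  qed
  show ?thesis
  proof (intro exI[of _ G.psi] conjI ballI)
    show "clinear_on UNIV G.psi" by (rule G.psi_clinear)
    show "C_positive C UNIV G.psi"
      unfolding C_positive_def Let_def
    proof (intro ballI allI impI)
      fix x m c a b
      assume xP: "x \<in> P_set UNIV C" and rep: "(\<forall>i<m. a i \<in> (UNIV :: 'n cmat set)) \<and> x = (\<Sum>i<m. smat (c i) (kron (a i) (b i)))"
      have x0: "x \<in> P0 C" using xP by (simp add: P_set_def P0_def)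
      have "(\<Sum>i<m. c i * mtr (G.psi (a i) ** transpose (b i))) = G.F x"
        using rep by (simp add: G.mtr_psi G.F_sum G.F_smat)
      also have "\<dots> = of_real (g x)" using x0 by (simp add: G.F_sa P0_def)
      finally show "Im (\<Sum>i<m. c i * mtr (G.psi (a i) ** transpose (b i))) = 0 \<and>
          0 \<le> Re (\<Sum>i<m. c i * mtr (G.psi (a i) ** transpose (b i)))"
        using g_pos[OF x0] by simp
    qed
    fix a assume aB: "a \<in> B"
    show "G.psi a = \<phi> a"
      by (simp add: vec_eq_iff G.psi_nth F_rel[OF Rel_basic[OF aB]] mtr_E)
  qed
qed

end
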